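(* Let $\mathcal{N}^+$ be a topological level-1 rooted network on $X$ with root $r$, and let $m=\mathrm{MRCA}(X)$. Then there is $k\ge 0$ and distinct nodes $r=r_1,h_1,r_2,h_2,\dots,r_k,h_k,r_{k+1}=m$ such that the nodes above $m$ are exactly $r_1,h_1,\dots,r_k,h_k$ and the edges above $m$ are exactly, for each $i=1,\dots,k$, two parallel edges from $r_i$ to $h_i$ (so $h_i$ is a hybrid node and the pair forms a $2$-cycle) together with one edge from $h_i$ to $r_{i+1}$. In particular, if $k=0$ then $m=r$.
   Context: Rooted network on $X$: connected directed acyclic graph without loops (at most two parallel edges between two nodes allowed) with a root $r$ (indegree 0, outdegree 2), leaves bijectively labeled by $X$ (indegree 1, outdegree 0), tree nodes (indegree 1, outdegree 2) and hybrid nodes (indegree 2, outdegree 1). A node $v$ is above $u$ if there is a nonempty directed path from $v$ to $u$; an edge with child $y$ is above a node $v$ if $y$ is above or equal to $v$. $\mathrm{MRCA}(X)$ is the lowest node among those lying on every directed path from $r$ to any leaf. A cycle is a cycle of the underlying undirected graph (a $2$-cycle being a pair of parallel edges); the network is level-1 if no two cycles share an edge. *)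

theory Defs
  imports Main
begin

text \<open>A directed multigraph is given by a node set V, an edge set E (edge identifiers),
  and source/target maps src, tgt.  Parallel edges are distinct edge identifiers with the
  same endpoints.\<close>

definition arcs :: "('e \<Rightarrow> 'v) \<Rightarrow> ('e \<Rightarrow> 'v) \<Rightarrow> 'e set \<Rightarrow> ('v \<times> 'v) set" where
  "arcs src tgt E = {(src e, tgt e) | e. e \<in> E}"

definition indeg :: "('e \<Rightarrow> 'v) \<Rightarrow> 'e set \<Rightarrow> 'v \<Rightarrow> nat" where
  "indeg tgt E v = card {e \<in> E. tgt e = v}"

definition outdeg :: "('e \<Rightarrow> 'v) \<Rightarrow> 'e set \<Rightarrow> 'v \<Rightarrow> nat" where
  "outdeg src E v = card {e \<in> E. src e = v}"

text \<open>A cycle of the underlying undirected multigraph: distinct edges e_0..e_{n-1} and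
  distinct nodes v_0..v_{n-1}, n \<ge> 2, with e_i joining v_i and v_{(i+1) mod n}.
  (n = 2 gives a pair of parallel edges, a 2-cycle.)\<close>
definition is_ucycle ::
  "('e \<Rightarrow> 'v) \<Rightarrow> ('e \<Rightarrow> 'v) \<Rightarrow> 'e set \<Rightarrow> 'e list \<Rightarrow> 'v list \<Rightarrow> bool" where
  "is_ucycle src tgt E es vs \<longleftrightarrow>
     length es = length vs \<and> length es \<ge> 2 \<and> distinct es \<and> distinct vs \<and> set es \<subseteq> E \<and>
     (\<forall>i < length es. {src (es ! i), tgt (es ! i)} = {vs ! i, vs ! ((i + 1) mod length es)})"

definition level1 :: "('e \<Rightarrow> 'v) \<Rightarrow> ('e \<Rightarrow> 'v) \<Rightarrow> 'e set \<Rightarrow> bool" where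
  "level1 src tgt E \<longleftrightarrow>
     (\<forall>es1 vs1 es2 vs2. is_ucycle src tgt E es1 vs1 \<and> is_ucycle src tgt E es2 vs2 \<and>
        set es1 \<inter> set es2 \<noteq> {} \<longrightarrow> set es1 = set es2)"

definition is_leaf where "is_leaf src tgt E v \<longleftrightarrow> indeg tgt E v = 1 \<and> outdeg src E v = 0"
definition is_tree_node where "is_tree_node src tgt E v \<longleftrightarrow> indeg tgt E v = 1 \<and> outdeg src E v = 2"
definition is_hybrid where "is_hybrid src tgt E v \<longleftrightarrow> indeg tgt E v = 2 \<and> outdeg src E v = 1"

definition rooted_network ::
  "'v set \<Rightarrow> 'e set \<Rightarrow> ('e \<Rightarrow> 'v) \<Rightarrow> ('e \<Rightarrow> 'v) \<Rightarrow> 'v \<Rightarrow> 'x set \<Rightarrow> ('x \<Rightarrow> 'v) \<Rightarrow> bool" where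
  "rooted_network V E src tgt r X lab \<longleftrightarrow>
     finite V \<and> finite E \<and>
     (\<forall>e \<in> E. src e \<in> V \<and> tgt e \<in> V \<and> src e \<noteq> tgt e) \<and>
     (\<forall>u v. card {e \<in> E. src e = u \<and> tgt e = v} \<le> 2) \<and>
     (\<forall>v. (v, v) \<notin> (arcs src tgt E)\<^sup>+) \<and>
     (\<forall>u \<in> V. \<forall>v \<in> V. (u, v) \<in> (arcs src tgt E \<union> (arcs src tgt E)\<inverse>)\<^sup>*) \<and>
     r \<in> V \<and> indeg tgt E r = 0 \<and> outdeg src E r = 2 \<and>
     (\<forall>v \<in> V - {r}. is_leaf src tgt E v \<or> is_tree_node src tgt E v \<or> is_hybrid src tgt E v) \<and>
     bij_betw lab X {v \<in> V. is_leaf src tgt E v}"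

definition dpath :: "('e \<Rightarrow> 'v) \<Rightarrow> ('e \<Rightarrow> 'v) \<Rightarrow> 'e set \<Rightarrow> 'v \<Rightarrow> 'v \<Rightarrow> 'v list \<Rightarrow> bool" where
  "dpath src tgt E u w p \<longleftrightarrow> p \<noteq> [] \<and> hd p = u \<and> last p = w \<and>
     (\<forall>i. i + 1 < length p \<longrightarrow> (p ! i, p ! (i + 1)) \<in> arcs src tgt E)"

definition above :: "('e \<Rightarrow> 'v) \<Rightarrow> ('e \<Rightarrow> 'v) \<Rightarrow> 'e set \<Rightarrow> 'v \<Rightarrow> 'v \<Rightarrow> bool" where
  "above src tgt E v u \<longleftrightarrow> (v, u) \<in> (arcs src tgt E)\<^sup>+"

definition edge_above :: "('e \<Rightarrow> 'v) \<Rightarrow> ('e \<Rightarrow> 'v) \<Rightarrow> 'e set \<Rightarrow> 'e \<Rightarrow> 'v \<Rightarrow> bool" where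
  "edge_above src tgt E e v \<longleftrightarrow> tgt e = v \<or> above src tgt E (tgt e) v"

definition on_all_root_leaf_paths where
  "on_all_root_leaf_paths V E src tgt r v \<longleftrightarrow> v \<in> V \<and>
     (\<forall>l \<in> V. is_leaf src tgt E l \<longrightarrow> (\<forall>p. dpath src tgt E r l p \<longrightarrow> v \<in> set p))"

definition is_MRCA where
  "is_MRCA V E src tgt r m \<longleftrightarrow> on_all_root_leaf_paths V E src tgt r m \<and>
     (\<forall>v. on_all_root_leaf_paths V E src tgt r v \<longrightarrow> v = m \<or> above src tgt E v m)"

end

theory Submission
  imports Defs
begin

lemma arcs_iff: "(u,v) \<in> arcs src tgt E \<longleftrightarrow> (\<exists>e\<in>E. src e = u \<and> tgt e = v)"
  by (auto simp: arcs_def)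

lemma arcs_converse: "arcs tgt src E = (arcs src tgt E)\<inverse>"
  by (auto simp: arcs_def)

lemma finite_arcs: "finite E \<Longrightarrow> finite (arcs src tgt E)"
proof -
  assume "finite E"
  have "arcs src tgt E = (\<lambda>e. (src e, tgt e)) ` E" by (auto simp: arcs_def)
  thus ?thesis using \<open>finite E\<close> by simp
qed

fun dp :: "('e \<Rightarrow> 'v) \<Rightarrow> ('e \<Rightarrow> 'v) \<Rightarrow> 'e set \<Rightarrow> 'e list \<Rightarrow> 'v list \<Rightarrow> bool" where
  "dp src tgt E [] [v] = True"
| "dp src tgt E (e#es) (u#v#vs) = (e \<in> E \<and> src e = u \<and> tgt e = v \<and> dp src tgt E es (v#vs))"
| "dp src tgt E _ _ = False"

fun up :: "('e \<Rightarrow> 'v) \<Rightarrow> ('e \<Rightarrow> 'v) \<Rightarrow> 'e set \<Rightarrow> 'e list \<Rightarrow> 'v list \<Rightarrow> bool" where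
  "up src tgt E [] [v] = True"
| "up src tgt E (e#es) (u#v#vs) = (e \<in> E \<and> {src e, tgt e} = {u, v} \<and> up src tgt E es (v#vs))"
| "up src tgt E _ _ = False"

lemma dp_ne: "dp src tgt E es vs \<Longrightarrow> vs \<noteq> []"
  by (cases "(src,tgt,E,es,vs)" rule: dp.cases) auto

lemma dp_reach: "dp src tgt E es vs \<Longrightarrow> x \<in> set vs \<Longrightarrow>
   (hd vs, x) \<in> (arcs src tgt E)\<^sup>* \<and> (x, last vs) \<in> (arcs src tgt E)\<^sup>*"
proof (induction src tgt E es vs arbitrary: x rule: dp.induct)
  case (2 src tgt E e es u v vs)
  then have a: "(u, v) \<in> arcs src tgt E" by (auto simp: arcs_iff)
  show ?case
  proof (cases "x = u")
    case True
    have "(v, last (v#vs)) \<in> (arcs src tgt E)\<^sup>*" using 2 by auto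
    then show ?thesis using True a by (simp add: converse_rtrancl_into_rtrancl)
  next
    case False
    then have "x \<in> set (v#vs)" using 2 by auto
    then have "(v, x) \<in> (arcs src tgt E)\<^sup>* \<and> (x, last (v#vs)) \<in> (arcs src tgt E)\<^sup>*" using 2 by auto
    then show ?thesis using a by (auto intro: converse_rtrancl_into_rtrancl)
  qed
qed auto

lemma dp_trancl: "dp src tgt E es (u#vs) \<Longrightarrow> x \<in> set vs \<Longrightarrow> (u, x) \<in> (arcs src tgt E)\<^sup>+"
proof -
  assume d: "dp src tgt E es (u#vs)" and x: "x \<in> set vs"
  obtain e es' v vs' where c: "es = e # es'" "vs = v # vs'"
    using d x by (cases es; cases vs) auto
  then have a: "(u, v) \<in> arcs src tgt E" and d': "dp src tgt E es' (v#vs')" using d by (auto simp: arcs_iff)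
  have "(v, x) \<in> (arcs src tgt E)\<^sup>*" using dp_reach[OF d'] x c by auto
  then show ?thesis using a by auto
qed

lemma dp_distinct: "\<forall>v. (v,v) \<notin> (arcs src tgt E)\<^sup>+ \<Longrightarrow> dp src tgt E es vs \<Longrightarrow> distinct vs"
proof (induction src tgt E es vs rule: dp.induct)
  case (2 src tgt E e es u v vs)
  then have "u \<notin> set (v#vs)" using dp_trancl[of src tgt E "e#es" u "v#vs"] by auto
  then show ?case using 2 by auto
qed auto

lemma dp_edges: "dp src tgt E es vs \<Longrightarrow> e \<in> set es \<Longrightarrow> e \<in> E \<and> src e \<in> set vs \<and> tgt e \<in> set vs"
  by (induction src tgt E es vs rule: dp.induct) auto

lemma dp_tgt_tl: "dp src tgt E es (u#vs) \<Longrightarrow> e \<in> set es \<Longrightarrow> tgt e \<in> set vs"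
  by (cases "(src,tgt,E,es,u#vs)" rule: dp.cases) (auto dest: dp_edges)

lemma dp_src_tl: "dp src tgt E (f#es) (u#vs) \<Longrightarrow> e \<in> set es \<Longrightarrow> src e \<in> set vs"
  by (cases "(src,tgt,E,f#es,u#vs)" rule: dp.cases) (auto dest: dp_edges)

lemma dp_distinct_edges: "\<forall>v. (v,v) \<notin> (arcs src tgt E)\<^sup>+ \<Longrightarrow> dp src tgt E es vs \<Longrightarrow> distinct es"
proof (induction src tgt E es vs rule: dp.induct)
  case (2 src tgt E e es u v vs)
  have "distinct (u#v#vs)" using dp_distinct[OF 2(2,3)] .
  then have "e \<notin> set es" using 2 dp_src_tl[OF 2(3)] by auto
  then show ?case using 2 by auto
qed auto

lemma reach_dp: "(u, w) \<in> (arcs src tgt E)\<^sup>* \<Longrightarrow> \<exists>es vs. dp src tgt E es vs \<and> hd vs = u \<and> last vs = w"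
proof (induction rule: converse_rtrancl_induct)
  case base
  then show ?case by (intro exI[of _ "[]"] exI[of _ "[w]"]) auto
next
  case (step u y)
  then obtain es vs where d: "dp src tgt E es vs" "hd vs = y" "last vs = w" by blast
  obtain e where e: "e \<in> E" "src e = u" "tgt e = y" using step(1) by (auto simp: arcs_iff)
  obtain vs' where vs: "vs = y # vs'" using dp_ne[OF d(1)] d(2) by (cases vs) auto
  show ?case using d e vs by (intro exI[of _ "e#es"] exI[of _ "u#vs"]) auto
qed

lemma dp_up: "dp src tgt E es vs \<Longrightarrow> up src tgt E es vs"
  by (induction src tgt E es vs rule: dp.induct) auto

lemma up_ne: "up src tgt E es vs \<Longrightarrow> vs \<noteq> []"
  by (cases "(src,tgt,E,es,vs)" rule: up.cases) auto

lemma up_append: "up src tgt E es1 vs1 \<Longrightarrow> up src tgt E es2 vs2 \<Longrightarrow> last vs1 = hd vs2 \<Longrightarrow>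
   up src tgt E (es1 @ es2) (vs1 @ tl vs2)"
proof (induction src tgt E es1 vs1 rule: up.induct)
  case (1 src tgt E v)
  then show ?case using up_ne[OF 1(1)] by (cases vs2) auto
next
  case (2 src tgt E e es u v vs)
  then show ?case by auto
qed auto

lemma up_rev: "up src tgt E es vs \<Longrightarrow> up src tgt E (rev es) (rev vs)"
proof (induction src tgt E es vs rule: up.induct)
  case (2 src tgt E e es u v vs)
  have a: "up src tgt E (rev es) (rev (v#vs))" using 2 by auto
  have b: "up src tgt E [e] [v, u]" using 2 by (auto simp: insert_commute)
  have "up src tgt E (rev es @ [e]) (rev (v#vs) @ tl [v,u])"
    by (rule up_append[OF a b]) simp
  then show ?case by simp
qed auto

lemma up_nth: "up src tgt E es vs \<Longrightarrow> length vs = Suc (length es) \<and> set es \<subseteq> E \<and>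
   (\<forall>i<length es. {src (es!i), tgt (es!i)} = {vs!i, vs!Suc i})"
proof (induction src tgt E es vs rule: up.induct)
  case (2 src tgt E e es u v vs)
  then show ?case by (auto simp: nth_Cons split: nat.splits)
qed auto

lemma up_cycle:
  assumes "up src tgt E es vs" "last vs = hd vs" "distinct es" "distinct (butlast vs)" "2 \<le> length es"
  shows "is_ucycle src tgt E es (butlast vs)"
proof -
  have n: "length vs = Suc (length es)" "set es \<subseteq> E"
    "\<forall>i<length es. {src (es!i), tgt (es!i)} = {vs!i, vs!Suc i}" using up_nth[OF assms(1)] by auto
  have "\<forall>i<length es. {src (es!i), tgt (es!i)} = {butlast vs ! i, butlast vs ! ((i+1) mod length es)}"
  proof (intro allI impI)
    fix i assume i: "i < length es"
    have bi: "butlast vs ! i = vs ! i" using i n by (simp add: nth_butlast)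
    show "{src (es!i), tgt (es!i)} = {butlast vs ! i, butlast vs ! ((i+1) mod length es)}"
    proof (cases "Suc i < length es")
      case True
      then show ?thesis using n bi by (simp add: nth_butlast)
    next
      case False
      then have "Suc i = length es" using i by simp
      then have "(i+1) mod length es = 0" by simp
      moreover have "butlast vs ! 0 = vs ! Suc i"
      proof -
        have "butlast vs ! 0 = vs ! 0" using n assms(5) by (intro nth_butlast) auto
        also have "\<dots> = hd vs" using n by (cases vs) auto
        also have "\<dots> = last vs" using assms(2) by simp
        also have "\<dots> = vs ! Suc i" using n \<open>Suc i = length es\<close> by (subst last_conv_nth) auto
        finally show ?thesis .
      qed
      ultimately show ?thesis using n i bi by simp
    qed
  qed
  then show ?thesis using assms n unfolding is_ucycle_def by simp
qed



lemma last_append_tl: "xs \<noteq> [] \<Longrightarrow> ys \<noteq> [] \<Longrightarrow> last xs = hd ys \<Longrightarrow> last (xs @ tl ys) = last ys"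
  by (cases ys) auto

lemma G:
  fixes src tgt :: "'e \<Rightarrow> 'v"
  assumes fin: "finite E" and acyc: "\<forall>v. (v,v) \<notin> (arcs src tgt E)\<^sup>+"
    and g: "g1 \<in> E" "g2 \<in> E" "g1 \<noteq> g2" "src g1 = s" "src g2 = s"
    and w: "(tgt g1, w) \<in> (arcs src tgt E)\<^sup>*" "(tgt g2, w) \<in> (arcs src tgt E)\<^sup>*"
  shows "\<exists>es vs t. is_ucycle src tgt E es vs \<and> g1 \<in> set es \<and> g2 \<in> set es \<and>
     (tgt g1, t) \<in> (arcs src tgt E)\<^sup>* \<and> (tgt g2, t) \<in> (arcs src tgt E)\<^sup>* \<and> (t, w) \<in> (arcs src tgt E)\<^sup>* \<and>
     (tgt g1 \<noteq> t \<longrightarrow> (\<forall>e\<in>set es. tgt e = tgt g1 \<longrightarrow> e = g1) \<and>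
        (\<exists>f\<in>set es. src f = tgt g1 \<and> (tgt f, t) \<in> (arcs src tgt E)\<^sup>* \<and> (\<forall>e\<in>set es. src e = tgt g1 \<longrightarrow> e = f)))"
proof -
  define A where "A = arcs src tgt E"
  define x1 where "x1 = tgt g1"
  define x2 where "x2 = tgt g2"
  have acA: "\<forall>v. (v,v) \<notin> A\<^sup>+" using acyc A_def by simp
  have wfA: "wf (A\<^sup>+)" unfolding A_def
    by (rule wf_trancl, rule finite_acyclic_wf[OF finite_arcs[OF fin]]) (use acyc in \<open>simp add: acyclic_def\<close>)
  define T where "T = {t. (x1,t) \<in> A\<^sup>* \<and> (x2,t) \<in> A\<^sup>* \<and> (t,w) \<in> A\<^sup>*}"
  have "w \<in> T" using w unfolding T_def A_def x1_def x2_def by simp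
  then obtain t where tT: "t \<in> T" and tmin: "\<forall>y. (y,t) \<in> A\<^sup>+ \<longrightarrow> y \<notin> T"
    using wfA unfolding wf_eq_minimal by blast
  have t1: "(x1,t) \<in> A\<^sup>*" and t2: "(x2,t) \<in> A\<^sup>*" and tw: "(t,w) \<in> A\<^sup>*" using tT T_def by auto
  obtain es1 vs1 where p1: "dp src tgt E es1 vs1" "hd vs1 = x1" "last vs1 = t"
    using reach_dp[of x1 t src tgt E] t1 A_def by auto
  obtain es2 vs2 where p2: "dp src tgt E es2 vs2" "hd vs2 = x2" "last vs2 = t"
    using reach_dp[of x2 t src tgt E] t2 A_def by auto
  have ne1: "vs1 \<noteq> []" and ne2: "vs2 \<noteq> []" using dp_ne p1 p2 by auto
  have x1v: "x1 \<in> set vs1" using ne1 p1 by (cases vs1) auto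
  have x2v: "x2 \<in> set vs2" using ne2 p2 by (cases vs2) auto
  have tv1: "t \<in> set vs1" using ne1 p1 by auto
  have tv2: "t \<in> set vs2" using ne2 p2 by auto
  have d1: "distinct vs1" and d2: "distinct vs2" using dp_distinct[OF acyc] p1 p2 by auto
  have de1: "distinct es1" and de2: "distinct es2" using dp_distinct_edges[OF acyc] p1 p2 by auto
  have meet: "y = t" if "y \<in> set vs1" "y \<in> set vs2" for y
  proof (rule ccontr)
    assume "y \<noteq> t"
    have a: "(x1,y) \<in> A\<^sup>*" "(y,t) \<in> A\<^sup>*" using dp_reach[OF p1(1) that(1)] p1 A_def by auto
    have b: "(x2,y) \<in> A\<^sup>*" using dp_reach[OF p2(1) that(2)] p2 A_def by auto
    have "y \<in> T" using a b tw unfolding T_def by auto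
    moreover have "(y,t) \<in> A\<^sup>+" using a(2) \<open>y \<noteq> t\<close> by (simp add: rtrancl_eq_or_trancl)
    ultimately show False using tmin by blast
  qed
  have sx1: "(s,x1) \<in> A" and sx2: "(s,x2) \<in> A" using g A_def x1_def x2_def by (auto simp: arcs_iff)
  have s1: "s \<notin> set vs1"
  proof
    assume "s \<in> set vs1"
    then have "(x1,s) \<in> A\<^sup>*" using dp_reach[OF p1(1)] p1 A_def by auto
    then have "(s,s) \<in> A\<^sup>+" using sx1 by auto
    then show False using acA by blast
  qed
  have s2: "s \<notin> set vs2"
  proof
    assume "s \<in> set vs2"
    then have "(x2,s) \<in> A\<^sup>*" using dp_reach[OF p2(1)] p2 A_def by auto
    then have "(s,s) \<in> A\<^sup>+" using sx2 by auto
    then show False using acA by blast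
  qed
  obtain rv where rv: "rev vs2 = t # rv" using ne2 p2 by (cases "rev vs2") (auto simp: last_rev[symmetric])
  have rvs: "set rv \<subseteq> set vs2" "t \<notin> set rv" "distinct rv"
    using rv d2 by (metis distinct.simps(2) distinct_rev set_rev set_subset_Cons)+
  have u1: "up src tgt E [g1] [s, x1]" using g x1_def by auto
  have u2: "up src tgt E es1 vs1" using dp_up p1 by auto
  have u3: "up src tgt E (rev es2) (t # rv)" using up_rev[OF dp_up[OF p2(1)]] rv by simp
  have u4: "up src tgt E [g2] [x2, s]" using g x2_def by (auto simp: insert_commute)
  have vs1eq: "[s, x1] @ tl vs1 = s # vs1" using ne1 p1 by (cases vs1) auto
  have "up src tgt E ([g1] @ es1) ([s, x1] @ tl vs1)" by (rule up_append[OF u1 u2]) (simp add: p1)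
  then have u12: "up src tgt E (g1 # es1) (s # vs1)" by (simp only: vs1eq) simp
  have lsv: "last (s # vs1) = t" using ne1 p1 by simp
  have u123: "up src tgt E (g1 # es1 @ rev es2) (s # vs1 @ rv)"
    using up_append[OF u12 u3] lsv by simp
  have lx2: "last (s # vs1 @ rv) = x2"
  proof (cases "rv = []")
    case True
    then have "vs2 = [t]" using rv by (metis rev_singleton_conv)
    then show ?thesis using p2 lsv True by simp
  next
    case False
    have "last rv = last (rev vs2)" using rv False by simp
    also have "\<dots> = x2" using p2 ne2 by (simp add: last_rev)
    finally show ?thesis using False by simp
  qed
  have uw: "up src tgt E ((g1 # es1 @ rev es2) @ [g2]) ((s # vs1 @ rv) @ [s])"
    using up_append[OF u123 u4] lx2 by simp
  define ews where "ews = (g1 # es1 @ rev es2) @ [g2]"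
  define cvs where "cvs = s # vs1 @ rv"
  have e1v: "src e \<in> set vs1 \<and> tgt e \<in> set vs1" if "e \<in> set es1" for e using dp_edges[OF p1(1) that] by auto
  have e2v: "src e \<in> set vs2 \<and> tgt e \<in> set vs2" if "e \<in> set es2" for e using dp_edges[OF p2(1) that] by auto
  have noloop: "src e \<noteq> tgt e" if "e \<in> E" for e
  proof
    assume "src e = tgt e"
    then have "(src e, src e) \<in> A" using that A_def by (auto simp: arcs_iff)
    then show False using acA by blast
  qed
  have dj: "set es1 \<inter> set es2 = {}"
  proof (rule ccontr)
    assume "set es1 \<inter> set es2 \<noteq> {}"
    then obtain e where e: "e \<in> set es1" "e \<in> set es2" by blast
    then have "src e = t" "tgt e = t" using e1v e2v meet by blast+
    moreover have "e \<in> E" using dp_edges[OF p1(1) e(1)] by simp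
    ultimately show False using noloop by metis
  qed
  have "g1 \<notin> set es1" "g2 \<notin> set es1" using e1v s1 g by metis+
  moreover have "g1 \<notin> set es2" "g2 \<notin> set es2" using e2v s2 g by metis+
  ultimately have dews: "distinct ews" unfolding ews_def
    using de1 de2 dj g by auto
  have dcvs: "distinct cvs" unfolding cvs_def
    using d1 rvs s1 s2 meet by auto
  have bl: "butlast ((s # vs1 @ rv) @ [s]) = cvs" unfolding cvs_def by (rule butlast_snoc)
  have cyc: "is_ucycle src tgt E ews cvs"
    using up_cycle[OF uw, unfolded bl] dews dcvs unfolding ews_def by simp
  have side: "(\<forall>e\<in>set ews. tgt e = x1 \<longrightarrow> e = g1) \<and>
        (\<exists>f\<in>set ews. src f = x1 \<and> (tgt f, t) \<in> A\<^sup>* \<and> (\<forall>e\<in>set ews. src e = x1 \<longrightarrow> e = f))"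
    if xt: "x1 \<noteq> t"
  proof -
    have x1n2: "x1 \<notin> set vs2" using meet x1v xt by blast
    obtain f es1' v vs' where c: "es1 = f # es1'" "vs1 = x1 # v # vs'"
      using p1 xt by (cases "(src,tgt,E,es1,vs1)" rule: dp.cases) auto
    have f: "src f = x1" "tgt f = v" "dp src tgt E es1' (v # vs')" using p1(1) c by auto
    have vt: "(v,t) \<in> A\<^sup>*" using dp_reach[OF f(3), of v] p1 c A_def by auto
    have x1n: "x1 \<notin> set (v#vs')" using d1 c by simp
    have A1: "\<forall>e\<in>set ews. tgt e = x1 \<longrightarrow> e = g1"
    proof (intro ballI impI)
      fix e assume e: "e \<in> set ews" "tgt e = x1"
      show "e = g1"
      proof -
        have "e \<notin> set es1" using dp_tgt_tl[OF p1(1)[unfolded c(2)], of e] e x1n by blast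
        moreover have "e \<notin> set es2" using e2v[of e] e x1n2 by blast
        moreover have "e \<noteq> g2" using x2v x1n2 e x2_def by blast
        ultimately show ?thesis using e(1) unfolding ews_def by auto
      qed
    qed
    have A2: "\<forall>e\<in>set ews. src e = x1 \<longrightarrow> e = f"
    proof (intro ballI impI)
      fix e assume e: "e \<in> set ews" "src e = x1"
      have "e \<notin> set es1'" using dp_src_tl[OF p1(1)[unfolded c], of e] e x1n by blast
      moreover have "e \<notin> set es2" using e2v[of e] e x1n2 by blast
      moreover have "e \<noteq> g1" "e \<noteq> g2" using e g s1 x1v by metis+
      ultimately show "e = f" using e(1) c unfolding ews_def by auto
    qed
    have "f \<in> set ews" using c ews_def by simp
    then show ?thesis using A1 A2 f(1,2) vt by blast
  qed
  show ?thesis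
    apply (rule exI[of _ ews], rule exI[of _ cvs], rule exI[of _ t])
    using cyc side t1 t2 tw unfolding ews_def A_def x1_def x2_def by auto
qed



lemma G':
  fixes src tgt :: "'e \<Rightarrow> 'v"
  assumes fin: "finite E" and acyc: "\<forall>v. (v,v) \<notin> (arcs src tgt E)\<^sup>+"
    and g: "g1 \<in> E" "g2 \<in> E" "g1 \<noteq> g2" "tgt g1 = x" "tgt g2 = x"
    and w: "(w, src g1) \<in> (arcs src tgt E)\<^sup>*" "(w, src g2) \<in> (arcs src tgt E)\<^sup>*"
  shows "\<exists>es vs. is_ucycle src tgt E es vs \<and> g1 \<in> set es \<and> g2 \<in> set es"
proof -
  have ac': "\<forall>v. (v,v) \<notin> (arcs tgt src E)\<^sup>+"
    using acyc by (simp add: arcs_converse[of src tgt E] trancl_converse)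
  have w': "(src g1, w) \<in> (arcs tgt src E)\<^sup>*" "(src g2, w) \<in> (arcs tgt src E)\<^sup>*"
    using w by (simp_all add: arcs_converse[of src tgt E] rtrancl_converse)
  obtain es vs where "is_ucycle tgt src E es vs" "g1 \<in> set es" "g2 \<in> set es"
    using G[OF fin ac' g(1,2,3,4,5) w'] by blast
  moreover have "is_ucycle tgt src E es vs = is_ucycle src tgt E es vs"
    unfolding is_ucycle_def by (simp add: insert_commute)
  ultimately show ?thesis by blast
qed

lemma dpath_single: "dpath src tgt E u w [a] \<longleftrightarrow> u = a \<and> w = a"
  by (auto simp: dpath_def)

lemma dpath_Cons2: "dpath src tgt E u w (a#b#q) \<longleftrightarrow>
    u = a \<and> (a,b) \<in> arcs src tgt E \<and> dpath src tgt E b w (b#q)"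
proof
  assume d: "dpath src tgt E u w (a#b#q)"
  have "0 + 1 < length (a#b#q)" by simp
  then have "((a#b#q)!0, (a#b#q)!(0+1)) \<in> arcs src tgt E" using d unfolding dpath_def by blast
  then have 1: "(a,b) \<in> arcs src tgt E" by simp
  have 2: "\<forall>i. i + 1 < length (b#q) \<longrightarrow> ((b#q) ! i, (b#q) ! (i + 1)) \<in> arcs src tgt E"
  proof (intro allI impI)
    fix i assume "i + 1 < length (b#q)"
    then have "Suc i + 1 < length (a#b#q)" by simp
    then have "((a#b#q) ! Suc i, (a#b#q) ! (Suc i + 1)) \<in> arcs src tgt E" using d unfolding dpath_def by blast
    then show "((b#q) ! i, (b#q) ! (i + 1)) \<in> arcs src tgt E" by simp
  qed
  show "u = a \<and> (a,b) \<in> arcs src tgt E \<and> dpath src tgt E b w (b#q)"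
    using d 1 2 unfolding dpath_def by auto
next
  assume d: "u = a \<and> (a,b) \<in> arcs src tgt E \<and> dpath src tgt E b w (b#q)"
  have "((a#b#q) ! i, (a#b#q) ! (i + 1)) \<in> arcs src tgt E" if "i + 1 < length (a#b#q)" for i
  proof (cases i)
    case 0 then show ?thesis using d by simp
  next
    case (Suc j)
    then have "j + 1 < length (b#q)" using that by simp
    then have "((b#q) ! j, (b#q) ! (j + 1)) \<in> arcs src tgt E" using d unfolding dpath_def by blast
    then show ?thesis using Suc by simp
  qed
  then show "dpath src tgt E u w (a#b#q)" using d unfolding dpath_def by auto
qed

lemma dp_dpath: "dp src tgt E es vs \<Longrightarrow> dpath src tgt E (hd vs) (last vs) vs"
proof (induction src tgt E es vs rule: dp.induct)
  case (1 src tgt E v)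
  then show ?case by (simp add: dpath_single)
next
  case (2 src tgt E e es u v vs)
  then show ?case by (auto simp: dpath_Cons2 arcs_iff)
qed auto

lemma reach_dpath: "(u, w) \<in> (arcs src tgt E)\<^sup>* \<Longrightarrow> \<exists>p. dpath src tgt E u w p"
  using reach_dp[of u w src tgt E] dp_dpath by metis

lemma dpath_ne: "dpath src tgt E u w p \<Longrightarrow> p \<noteq> []"
  by (simp add: dpath_def)

lemma dpath_mem: "dpath src tgt E u w p \<Longrightarrow> x \<in> set p \<Longrightarrow>
   (u,x) \<in> (arcs src tgt E)\<^sup>* \<and> (x,w) \<in> (arcs src tgt E)\<^sup>*"
proof (induction p arbitrary: u x)
  case Nil then show ?case by (simp add: dpath_def)
next
  case (Cons a p)
  show ?case
  proof (cases p)
    case Nil then show ?thesis using Cons by (simp add: dpath_single)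
  next
    case (Cons b q)
    then have d: "u = a" "(a,b) \<in> arcs src tgt E" "dpath src tgt E b w (b#q)"
      using Cons.prems(1) by (auto simp: dpath_Cons2)
    have bw: "(b,w) \<in> (arcs src tgt E)\<^sup>*" using Cons.IH[of b b] d(3) Cons by simp
    show ?thesis
    proof (cases "x = a")
      case True then show ?thesis using d bw by (auto intro: converse_rtrancl_into_rtrancl)
    next
      case False
      then have "x \<in> set p" using Cons.prems(2) by simp
      then have "(b,x) \<in> (arcs src tgt E)\<^sup>* \<and> (x,w) \<in> (arcs src tgt E)\<^sup>*" using Cons.IH[of b x] d(3) Cons by simp
      then show ?thesis using d by (auto intro: converse_rtrancl_into_rtrancl)
    qed
  qed
qed

lemma dpath_app: "dpath src tgt E u x p1 \<Longrightarrow> (x,y) \<in> arcs src tgt E \<Longrightarrow> dpath src tgt E y l p2 \<Longrightarrow>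
   dpath src tgt E u l (p1 @ p2)"
proof (induction p1 arbitrary: u)
  case Nil then show ?case by (simp add: dpath_def)
next
  case (Cons a p)
  obtain q where p2: "p2 = y # q" using Cons.prems(3) unfolding dpath_def by (cases p2) auto
  show ?case
  proof (cases p)
    case Nil
    then show ?thesis using Cons.prems p2 by (auto simp: dpath_single dpath_Cons2)
  next
    case (Cons b q')
    then have d: "u = a" "(a,b) \<in> arcs src tgt E" "dpath src tgt E b x (b#q')"
      using Cons.prems(1) by (auto simp: dpath_Cons2)
    have "dpath src tgt E b l (p @ p2)" using Cons.IH[of b] d(3) Cons.prems(2,3) Cons by simp
    then show ?thesis using d Cons by (simp add: dpath_Cons2)
  qed
qed

lemma dpath_succ: "dpath src tgt E u l p \<Longrightarrow> v \<in> set p \<Longrightarrow> v \<noteq> l \<Longrightarrow>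
   \<exists>y\<in>set p. (v,y) \<in> arcs src tgt E"
proof (induction p arbitrary: u)
  case Nil then show ?case by (simp add: dpath_def)
next
  case (Cons a p)
  show ?case
  proof (cases p)
    case Nil then show ?thesis using Cons by (simp add: dpath_single)
  next
    case (Cons b q)
    then have d: "u = a" "(a,b) \<in> arcs src tgt E" "dpath src tgt E b l (b#q)"
      using Cons.prems(1) by (auto simp: dpath_Cons2)
    show ?thesis
    proof (cases "v = a")
      case True then show ?thesis using d Cons by auto
    next
      case False
      then have "v \<in> set p" using Cons.prems(2) by simp
      then show ?thesis using Cons.IH[of b] d(3) Cons.prems(3) Cons by auto
    qed
  qed
qed



lemma card2_other: "card S = 2 \<Longrightarrow> f \<in> S \<Longrightarrow> \<exists>e\<in>S. e \<noteq> f"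
  unfolding card_2_iff by auto

locale net =
  fixes V :: "'v set" and E :: "'e set" and src tgt :: "'e \<Rightarrow> 'v"
    and r m :: 'v and X :: "'x set" and lab :: "'x \<Rightarrow> 'v"
  assumes rn: "rooted_network V E src tgt r X lab"
    and l1: "level1 src tgt E"
    and mr: "is_MRCA V E src tgt r m"
begin

abbreviation A where "A \<equiv> arcs src tgt E"
abbreviation cut where "cut v \<equiv> on_all_root_leaf_paths V E src tgt r v"

lemma finE: "finite E" using rn by (simp add: rooted_network_def)
lemma edgeV: "e \<in> E \<Longrightarrow> src e \<in> V \<and> tgt e \<in> V" using rn by (simp add: rooted_network_def)
lemma acyc: "\<forall>v. (v,v) \<notin> A\<^sup>+" using rn by (simp add: rooted_network_def)
lemma rV: "r \<in> V" using rn by (simp add: rooted_network_def)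
lemma outr: "outdeg src E r = 2" using rn by (simp add: rooted_network_def)
lemma noin_r: "e \<in> E \<Longrightarrow> tgt e \<noteq> r"
proof
  assume "e \<in> E" "tgt e = r"
  then have "{e \<in> E. tgt e = r} \<noteq> {}" by auto
  moreover have "indeg tgt E r = 0" using rn by (simp add: rooted_network_def)
  moreover have "finite {e \<in> E. tgt e = r}" using finE by simp
  ultimately show False by (auto simp: indeg_def)
qed
lemma classify: "v \<in> V \<Longrightarrow> v \<noteq> r \<Longrightarrow> is_leaf src tgt E v \<or> is_tree_node src tgt E v \<or> is_hybrid src tgt E v"
  using rn by (simp add: rooted_network_def)

lemma arcV: "(u,v) \<in> A \<Longrightarrow> u \<in> V \<and> v \<in> V"
  by (auto simp: arcs_iff dest: edgeV)

lemma wfA: "wf A"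
  using finite_acyclic_wf[OF finite_arcs[OF finE]] acyc by (simp add: acyclic_def)
lemma wfAi: "wf (A\<inverse>)"
  using finite_acyclic_wf_converse[OF finite_arcs[OF finE]] acyc by (simp add: acyclic_def)

lemma outdeg_pos: "(u,v) \<in> A \<Longrightarrow> outdeg src E u \<noteq> 0"
proof -
  assume "(u,v) \<in> A"
  then obtain e where "e \<in> E" "src e = u" by (auto simp: arcs_iff)
  then have "{e \<in> E. src e = u} \<noteq> {}" by auto
  then show ?thesis using finE by (simp add: outdeg_def)
qed

lemma reach_r: "v \<in> V \<Longrightarrow> (r, v) \<in> A\<^sup>*"
proof (induction v rule: wf_induct_rule[OF wfA])
  case (1 v)
  show ?case
  proof (cases "v = r")
    case True then show ?thesis by simp
  next
    case False
    have "indeg tgt E v \<noteq> 0" using classify[OF 1(2) False]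
      by (auto simp: is_leaf_def is_tree_node_def is_hybrid_def)
    then obtain e where e: "e \<in> E" "tgt e = v" unfolding indeg_def by (metis (mono_tags, lifting) card.empty empty_Collect_eq)
    then have a: "(src e, v) \<in> A" by (auto simp: arcs_iff)
    then have "(r, src e) \<in> A\<^sup>*" using 1 arcV by blast
    then show ?thesis using a by simp
  qed
qed

lemma leaf_below: "v \<in> V \<Longrightarrow> \<exists>l\<in>V. is_leaf src tgt E l \<and> (v, l) \<in> A\<^sup>*"
proof (induction v rule: wf_induct_rule[OF wfAi])
  case (1 v)
  show ?case
  proof (cases "outdeg src E v = 0")
    case True
    then have "v \<noteq> r" using outr by auto
    then have "is_leaf src tgt E v" using classify[OF 1(2)] True
      by (auto simp: is_leaf_def is_tree_node_def is_hybrid_def)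
    then show ?thesis using 1 by blast
  next
    case False
    then obtain e where e: "e \<in> E" "src e = v" unfolding outdeg_def by (metis (mono_tags, lifting) card.empty empty_Collect_eq)
    then have a: "(v, tgt e) \<in> A" by (auto simp: arcs_iff)
    then obtain l where "l \<in> V" "is_leaf src tgt E l" "(tgt e, l) \<in> A\<^sup>*" using 1 arcV by blast
    then show ?thesis using a by (meson converse_rtrancl_into_rtrancl)
  qed
qed

lemma leaf_noout: "is_leaf src tgt E l \<Longrightarrow> (l, y) \<notin> A"
  using outdeg_pos[of l y] by (auto simp: is_leaf_def)

lemma CP: "cut v \<Longrightarrow> (u,y) \<in> A \<Longrightarrow> (v,u) \<in> A\<^sup>* \<or> (y,v) \<in> A\<^sup>*"
proof -
  assume c: "cut v" and a: "(u,y) \<in> A"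
  have uV: "u \<in> V" and yV: "y \<in> V" using arcV[OF a] by auto
  obtain p1 where p1: "dpath src tgt E r u p1" using reach_dpath[OF reach_r[OF uV]] by blast
  obtain l where l: "l \<in> V" "is_leaf src tgt E l" "(y,l) \<in> A\<^sup>*" using leaf_below[OF yV] by blast
  obtain p2 where p2: "dpath src tgt E y l p2" using reach_dpath[OF l(3)] by blast
  have p: "dpath src tgt E r l (p1 @ p2)" using dpath_app[OF p1 a p2] .
  have "v \<in> set (p1 @ p2)" using c l p unfolding on_all_root_leaf_paths_def by blast
  then show ?thesis using dpath_mem[OF p1] dpath_mem[OF p2] by auto
qed

lemma cutV: "cut v \<Longrightarrow> v \<in> V" by (simp add: on_all_root_leaf_paths_def)

lemma mcut: "cut m" using mr by (simp add: is_MRCA_def)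
lemma mlow: "cut v \<Longrightarrow> (v, m) \<in> A\<^sup>*"
  using mr unfolding is_MRCA_def above_def by auto

lemma K: "(x,m) \<in> A\<^sup>+ \<Longrightarrow> (x,y) \<in> A \<Longrightarrow> (y,m) \<in> A\<^sup>*"
proof -
  assume a: "(x,m) \<in> A\<^sup>+" "(x,y) \<in> A"
  show ?thesis
  proof (cases "(m,x) \<in> A\<^sup>*")
    case True
    then have "(x,x) \<in> A\<^sup>+" using a by auto
    then show ?thesis using acyc by blast
  next
    case False then show ?thesis using CP[OF mcut a(2)] by blast
  qed
qed

lemma cut_prop: "cut c \<Longrightarrow> (c,h) \<in> A \<Longrightarrow> (\<forall>y. (c,y) \<in> A \<longrightarrow> y = h) \<Longrightarrow> cut h"
proof -
  assume c: "cut c" and a: "(c,h) \<in> A" and all: "\<forall>y. (c,y) \<in> A \<longrightarrow> y = h"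
  have "h \<in> set p" if l: "l \<in> V" "is_leaf src tgt E l" and p: "dpath src tgt E r l p" for l p
  proof -
    have "c \<in> set p" using c l p unfolding on_all_root_leaf_paths_def by blast
    moreover have "c \<noteq> l" using leaf_noout[OF l(2)] a by blast
    ultimately obtain y where "y \<in> set p" "(c,y) \<in> A" using dpath_succ[OF p] by blast
    then show ?thesis using all by blast
  qed
  then show ?thesis using arcV[OF a] unfolding on_all_root_leaf_paths_def by blast
qed

lemma ucyc_E: "is_ucycle src tgt E es vs \<Longrightarrow> set es \<subseteq> E"
  by (simp add: is_ucycle_def)

lemma level1_use: "is_ucycle src tgt E es1 vs1 \<Longrightarrow> is_ucycle src tgt E es2 vs2 \<Longrightarrow> e \<in> set es1 \<Longrightarrow>
   e \<in> set es2 \<Longrightarrow> set es1 = set es2"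
  using l1 unfolding level1_def by blast

lemma Side:
  assumes g1: "g1 \<in> E" "tgt g1 = x" and cyc: "is_ucycle src tgt E es vs" "g1 \<in> set es"
    and xt: "x \<noteq> t" "(x,t) \<in> A\<^sup>*" "(t,m) \<in> A\<^sup>*"
    and pin: "\<forall>e\<in>set es. tgt e = x \<longrightarrow> e = g1"
    and pout: "\<exists>f\<in>set es. src f = x \<and> (tgt f, t) \<in> A\<^sup>* \<and> (\<forall>e\<in>set es. src e = x \<longrightarrow> e = f)"
  shows False
proof -
  obtain f where f: "f \<in> set es" "src f = x" "\<forall>e\<in>set es. src e = x \<longrightarrow> e = f" using pout by blast
  have fE: "f \<in> E" using f ucyc_E[OF cyc(1)] by blast
  have "(x,t) \<in> A\<^sup>+" using xt by (simp add: rtrancl_eq_or_trancl)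
  then have xm: "(x,m) \<in> A\<^sup>+" using xt(3) by (rule trancl_rtrancl_trancl)
  have xV: "x \<in> V" using edgeV g1 by blast
  have xr: "x \<noteq> r" using noin_r g1 by blast
  have xf: "(x, tgt f) \<in> A" unfolding arcs_iff using fE f(2) by blast
  consider "is_leaf src tgt E x" | "is_tree_node src tgt E x" | "is_hybrid src tgt E x"
    using classify[OF xV xr] by blast
  then show False
  proof cases
    case 1 then show ?thesis using leaf_noout xf by blast
  next
    case 2
    then have "card {e \<in> E. src e = x} = 2" by (simp add: is_tree_node_def outdeg_def)
    then obtain e2 where e2: "e2 \<in> E" "src e2 = x" "e2 \<noteq> f" using card2_other[of "{e \<in> E. src e = x}" f] fE f by blast
    have xe2: "(x, tgt e2) \<in> A" using e2 by (auto simp: arcs_iff)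
    have "(tgt f, m) \<in> A\<^sup>*" "(tgt e2, m) \<in> A\<^sup>*" using K[OF xm xf] K[OF xm xe2] by auto
    then obtain es' vs' where c': "is_ucycle src tgt E es' vs'" "f \<in> set es'" "e2 \<in> set es'"
      using G[OF finE acyc fE e2(1) e2(3)[symmetric] f(2) e2(2)] by blast
    have "set es = set es'" using level1_use[OF cyc(1) c'(1) f(1) c'(2)] .
    then show False using c'(3) f(3) e2 by blast
  next
    case 3
    then have "card {e \<in> E. tgt e = x} = 2" by (simp add: is_hybrid_def indeg_def)
    then obtain e2 where e2: "e2 \<in> E" "tgt e2 = x" "e2 \<noteq> g1" using card2_other[of "{e \<in> E. tgt e = x}" g1] g1 by blast
    have "(r, src g1) \<in> A\<^sup>*" "(r, src e2) \<in> A\<^sup>*" using reach_r edgeV g1 e2 by auto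
    then obtain es' vs' where c': "is_ucycle src tgt E es' vs'" "g1 \<in> set es'" "e2 \<in> set es'"
      using G'[OF finE acyc g1(1) e2(1) e2(3)[symmetric] g1(2) e2(2)] by blast
    have "set es = set es'" using level1_use[OF cyc(1) c'(1) cyc(2) c'(2)] .
    then show False using c'(3) pin e2 by blast
  qed
qed

lemma Core:
  assumes o2: "outdeg src E c = 2" and cm: "(c,m) \<in> A\<^sup>+"
  shows "\<exists>h. \<forall>e\<in>E. src e = c \<longrightarrow> tgt e = h"
proof -
  obtain e1 e2 where e: "e1 \<noteq> e2" "{e \<in> E. src e = c} = {e1, e2}"
    using o2 unfolding outdeg_def card_2_iff by blast
  have eE: "e1 \<in> E" "e2 \<in> E" "src e1 = c" "src e2 = c" using e(2) by blast+
  show ?thesis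
  proof (cases "tgt e1 = tgt e2")
    case True
    have "tgt e = tgt e1" if "e \<in> E" "src e = c" for e
    proof -
      have "e \<in> {e \<in> E. src e = c}" using that by simp
      then have "e = e1 \<or> e = e2" using e(2) by simp
      then show ?thesis using True by auto
    qed
    then show ?thesis by blast
  next
    case False
    have ca: "(c, tgt e1) \<in> A" "(c, tgt e2) \<in> A" using eE by (auto simp: arcs_iff)
    have am: "(tgt e1, m) \<in> A\<^sup>*" "(tgt e2, m) \<in> A\<^sup>*" using K[OF cm ca(1)] K[OF cm ca(2)] by auto
    obtain es vs t where C1: "is_ucycle src tgt E es vs" "e1 \<in> set es" "e2 \<in> set es"
      "(tgt e1, t) \<in> A\<^sup>*" "(tgt e2, t) \<in> A\<^sup>*" "(t, m) \<in> A\<^sup>*"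
      "tgt e1 \<noteq> t \<longrightarrow> (\<forall>e\<in>set es. tgt e = tgt e1 \<longrightarrow> e = e1) \<and>
        (\<exists>f\<in>set es. src f = tgt e1 \<and> (tgt f, t) \<in> A\<^sup>* \<and> (\<forall>e\<in>set es. src e = tgt e1 \<longrightarrow> e = f))"
      using G[OF finE acyc eE(1,2) e(1) eE(3,4) am] by blast
    obtain es' vs' t' where C2: "is_ucycle src tgt E es' vs'" "e2 \<in> set es'" "e1 \<in> set es'"
      "(tgt e2, t') \<in> A\<^sup>*" "(tgt e1, t') \<in> A\<^sup>*" "(t', m) \<in> A\<^sup>*"
      "tgt e2 \<noteq> t' \<longrightarrow> (\<forall>e\<in>set es'. tgt e = tgt e2 \<longrightarrow> e = e2) \<and>
        (\<exists>f\<in>set es'. src f = tgt e2 \<and> (tgt f, t') \<in> A\<^sup>* \<and> (\<forall>e\<in>set es'. src e = tgt e2 \<longrightarrow> e = f))"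
      using G[OF finE acyc eE(2,1) e(1)[symmetric] eE(4,3) am(2,1)] by blast
    show ?thesis
    proof (cases "tgt e1 = t")
      case False
      then show ?thesis using Side[OF eE(1) refl C1(1,2) False C1(4,6)] C1(7) by blast
    next
      case True
      have "tgt e2 \<noteq> t'"
      proof
        assume "tgt e2 = t'"
        then have "(tgt e1, tgt e2) \<in> A\<^sup>*" "(tgt e2, tgt e1) \<in> A\<^sup>*" using C1(5) C2(5) True by auto
        then have "(tgt e1, tgt e2) \<in> A\<^sup>+" "(tgt e2, tgt e1) \<in> A\<^sup>*" using False by (auto simp: rtrancl_eq_or_trancl)
        then have "(tgt e1, tgt e1) \<in> A\<^sup>+" by (rule trancl_rtrancl_trancl)
        then show False using acyc by blast
      qed
      then show ?thesis using Side[OF eE(2) refl C2(1,2) _ C2(4,6)] C2(7) by blast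
    qed
  qed
qed

end



context net
begin

lemma wfR: "wf ((A\<inverse>)\<^sup>+)" using wf_trancl[OF wfAi] .

lemma above_iff: "above src tgt E v u \<longleftrightarrow> (v,u) \<in> A\<^sup>+" by (simp add: above_def)

lemma chain:
  assumes "cut c" "(c,m) \<in> A\<^sup>*" "c = m \<or> outdeg src E c = 2"
  shows "\<exists>k rs hs. length rs = k + 1 \<and> length hs = k \<and> distinct (rs @ hs) \<and>
           set (rs @ hs) \<subseteq> {v\<in>V. (c,v) \<in> A\<^sup>*} \<and> rs ! 0 = c \<and> rs ! k = m \<and>
           {v \<in> V. (c,v) \<in> A\<^sup>* \<and> above src tgt E v m} = set (take k rs) \<union> set hs \<and>
           (\<forall>i < k. card {e \<in> E. src e = rs ! i \<and> tgt e = hs ! i} = 2 \<and>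
                    card {e \<in> E. src e = hs ! i \<and> tgt e = rs ! (i + 1)} = 1) \<and>
           {e \<in> E. (c, src e) \<in> A\<^sup>* \<and> edge_above src tgt E e m} =
             (\<Union>i < k. {e \<in> E. src e = rs ! i \<and> tgt e = hs ! i} \<union>
                       {e \<in> E. src e = hs ! i \<and> tgt e = rs ! (i + 1)})"
  using assms
proof (induction c rule: wf_induct_rule[OF wfR])
  case (1 c)
  note IH = "1.IH"
  show ?case
  proof (cases "c = m")
    case True
    have mV: "m \<in> V" using cutV mcut by blast
    have n1: "{v \<in> V. (m,v) \<in> A\<^sup>* \<and> above src tgt E v m} = {}"
    proof -
      have False if "(m,v) \<in> A\<^sup>*" "(v,m) \<in> A\<^sup>+" for v
      proof -
        have "(m,m) \<in> A\<^sup>+" using that by (rule rtrancl_trancl_trancl)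
        then show False using acyc by blast
      qed
      then show ?thesis by (auto simp: above_iff)
    qed
    have n2: "{e \<in> E. (m, src e) \<in> A\<^sup>* \<and> edge_above src tgt E e m} = {}"
    proof -
      have False if e: "e \<in> E" "(m, src e) \<in> A\<^sup>*" "edge_above src tgt E e m" for e
      proof -
        have a: "(src e, tgt e) \<in> A" using e by (auto simp: arcs_iff)
        have mt: "(m, tgt e) \<in> A\<^sup>+" using rtrancl_into_trancl1[OF e(2) a] .
        have "tgt e = m \<or> (tgt e, m) \<in> A\<^sup>+" using e(3) by (simp add: edge_above_def above_iff)
        then have "(m,m) \<in> A\<^sup>+" using mt by auto
        then show False using acyc by blast
      qed
      then show ?thesis by blast
    qed
    show ?thesis
      apply (rule exI[of _ 0], rule exI[of _ "[m]"], rule exI[of _ "[]"])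
      using True mV n1 n2 by simp
  next
    case False
    have o2: "outdeg src E c = 2" using "1.prems"(3) False by simp
    have cm: "(c,m) \<in> A\<^sup>+" using "1.prems"(2) False by (simp add: rtrancl_eq_or_trancl)
    obtain h where Eh: "\<forall>e\<in>E. src e = c \<longrightarrow> tgt e = h" using Core[OF o2 cm] by blast
    obtain e1 e2 where e: "e1 \<noteq> e2" "{e \<in> E. src e = c} = {e1, e2}"
      using o2 unfolding outdeg_def card_2_iff by blast
    have eE: "e1 \<in> E" "e2 \<in> E" "src e1 = c" "src e2 = c" using e(2) by blast+
    have et: "tgt e1 = h" "tgt e2 = h" using Eh eE by auto
    have ch: "(c,h) \<in> A" using eE et unfolding arcs_iff by blast
    have allc: "\<forall>y. (c,y) \<in> A \<longrightarrow> y = h" using Eh unfolding arcs_iff by blast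
    have hV: "h \<in> V" using arcV[OF ch] by simp
    have hr: "h \<noteq> r" using noin_r[OF eE(1)] et by simp
    have "{e1,e2} \<subseteq> {e \<in> E. tgt e = h}" using eE et by auto
    moreover have "finite {e \<in> E. tgt e = h}" using finE by simp
    ultimately have "card {e1,e2} \<le> indeg tgt E h" unfolding indeg_def by (rule card_mono[rotated])
    then have ih2: "indeg tgt E h \<ge> 2" using e(1) by simp
    then have hh: "is_hybrid src tgt E h" using classify[OF hV hr]
      by (auto simp: is_leaf_def is_tree_node_def)
    have cch: "{e \<in> E. src e = c \<and> tgt e = h} = {e1, e2}" using e(2) Eh by blast
    have card_ch: "card {e \<in> E. src e = c \<and> tgt e = h} = 2" using cch e(1) by simp
    have "card {e \<in> E. src e = h} = 1" using hh by (simp add: is_hybrid_def outdeg_def)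
    then obtain g where g: "{e \<in> E. src e = h} = {g}" by (rule card_1_singletonE)
    have gE: "g \<in> E" "src g = h" using g by blast+
    define w where "w = tgt g"
    have hw: "(h,w) \<in> A" using gE unfolding arcs_iff w_def by blast
    have gu: "e = g" if "e \<in> E" "src e = h" for e
    proof -
      have "e \<in> {e \<in> E. src e = h}" using that by simp
      then show ?thesis using g by simp
    qed
    have allh: "\<forall>y. (h,y) \<in> A \<longrightarrow> y = w" using gu unfolding arcs_iff w_def by blast
    have card_hw: "card {e \<in> E. src e = h \<and> tgt e = w} = 1"
    proof -
      have "{e \<in> E. src e = h \<and> tgt e = w} = {g}" using g w_def by blast
      then show ?thesis by simp
    qed
    have cuth: "cut h" using cut_prop[OF "1.prems"(1) ch allc] .
    have cutw: "cut w" using cut_prop[OF cuth hw allh] .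
    have wm: "(w,m) \<in> A\<^sup>*" using mlow[OF cutw] .
    have cw: "(c,w) \<in> A\<^sup>+" using ch hw by auto
    have hm: "(h,m) \<in> A\<^sup>+" using rtrancl_into_trancl2[OF hw wm] .
    have wV: "w \<in> V" using arcV[OF hw] by simp
    have winv: "w = m \<or> outdeg src E w = 2"
    proof (cases "w = m")
      case True then show ?thesis by simp
    next
      case False
      note wnm = False
      then have "(w,m) \<in> A\<^sup>+" using wm by (simp add: rtrancl_eq_or_trancl)
      then obtain y where wy: "(w,y) \<in> A" by (meson tranclD)
      have wr: "w \<noteq> r" using noin_r[OF gE(1)] w_def by simp
      consider "is_leaf src tgt E w" | "is_tree_node src tgt E w" | "is_hybrid src tgt E w"
        using classify[OF wV wr] by blast
      then have "outdeg src E w = 2"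
      proof cases
        case 1 then show ?thesis using leaf_noout wy by blast
      next
        case 2 then show ?thesis by (simp add: is_tree_node_def)
      next
        case 3
        then have "card {e \<in> E. tgt e = w} = 2" by (simp add: is_hybrid_def indeg_def)
        then obtain e' where e': "e' \<in> E" "tgt e' = w" "e' \<noteq> g"
          using card2_other[of "{e \<in> E. tgt e = w}" g] gE w_def by blast
        define p where "p = src e'"
        have pw: "(p,w) \<in> A" using e' p_def unfolding arcs_iff by blast
        have ph: "p \<noteq> h"
        proof
          assume "p = h"
          then have "e' \<in> {e \<in> E. src e = h}" using e' p_def by simp
          then show False using g e'(3) by blast
        qed
        have False
        proof (cases "(w,h) \<in> A\<^sup>*")
          case True
          then have "(h,h) \<in> A\<^sup>+" using rtrancl_into_trancl2[OF hw] by blast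
          then show False using acyc by blast
        next
          case False
          then have "(h,p) \<in> A\<^sup>*" using CP[OF cuth pw] by blast
          then have "(h,p) \<in> A\<^sup>+" using ph by (simp add: rtrancl_eq_or_trancl)
          then obtain y where "(h,y) \<in> A" "(y,p) \<in> A\<^sup>*" by (meson tranclD)
          then have "(w,p) \<in> A\<^sup>*" using allh by blast
          then have "(w,w) \<in> A\<^sup>+" using rtrancl_into_trancl1[OF _ pw] by blast
          then show False using acyc by blast
        qed
        then show ?thesis ..
      qed
      then show ?thesis by simp
    qed
    have wc: "(w,c) \<in> (A\<inverse>)\<^sup>+" using cw by (simp add: trancl_converse)
    obtain k rs hs where P: "length rs = k + 1" "length hs = k" "distinct (rs @ hs)"
           "set (rs @ hs) \<subseteq> {v\<in>V. (w,v) \<in> A\<^sup>*}" "rs ! 0 = w" "rs ! k = m"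
           "{v \<in> V. (w,v) \<in> A\<^sup>* \<and> above src tgt E v m} = set (take k rs) \<union> set hs"
           "\<forall>i < k. card {e \<in> E. src e = rs ! i \<and> tgt e = hs ! i} = 2 \<and>
                    card {e \<in> E. src e = hs ! i \<and> tgt e = rs ! (i + 1)} = 1"
           "{e \<in> E. (w, src e) \<in> A\<^sup>* \<and> edge_above src tgt E e m} =
             (\<Union>i < k. {e \<in> E. src e = rs ! i \<and> tgt e = hs ! i} \<union>
                       {e \<in> E. src e = hs ! i \<and> tgt e = rs ! (i + 1)})"
      using IH[OF wc cutw wm winv] by blast
    have reach: "(c,v) \<in> A\<^sup>* \<longleftrightarrow> v = c \<or> v = h \<or> (w,v) \<in> A\<^sup>*" for v
    proof
      assume "(c,v) \<in> A\<^sup>*"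
      then show "v = c \<or> v = h \<or> (w,v) \<in> A\<^sup>*"
      proof (cases rule: converse_rtranclE)
        case (step y)
        then have "y = h" using allc by blast
        with step(2) show ?thesis
        proof (cases rule: converse_rtranclE)
          case (step z)
          then have "z = w" using allh \<open>y = h\<close> by blast
          then show ?thesis using step by simp
        qed auto
      qed simp
    next
      assume "v = c \<or> v = h \<or> (w,v) \<in> A\<^sup>*"
      then show "(c,v) \<in> A\<^sup>*" using ch cw by (meson r_into_rtrancl rtrancl_trans trancl_into_rtrancl rtrancl.rtrancl_refl)
    qed
    have cnw: "(w,c) \<notin> A\<^sup>*"
    proof
      assume "(w,c) \<in> A\<^sup>*"
      then have "(c,c) \<in> A\<^sup>+" using trancl_rtrancl_trancl[OF cw] by blast
      then show False using acyc by blast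
    qed
    have hnw: "(w,h) \<notin> A\<^sup>*"
    proof
      assume "(w,h) \<in> A\<^sup>*"
      then have "(h,h) \<in> A\<^sup>+" using rtrancl_into_trancl2[OF hw] by blast
      then show False using acyc by blast
    qed
    have ch_ne: "c \<noteq> h" using ch acyc by auto
    have cV: "c \<in> V" using arcV[OF ch] by simp
    have c1: "distinct ((c # rs) @ (h # hs))" using P(3,4) cnw hnw ch_ne by auto
    have c2: "set ((c # rs) @ (h # hs)) \<subseteq> {v\<in>V. (c,v) \<in> A\<^sup>*}" using P(4) cV hV reach by auto
    have c3: "(c # rs) ! Suc k = m" using P(6) by simp
    have hab: "above src tgt E h m" "above src tgt E c m" using hm cm by (simp_all add: above_iff)
    have c4: "{v \<in> V. (c,v) \<in> A\<^sup>* \<and> above src tgt E v m} = set (take (Suc k) (c # rs)) \<union> set (h # hs)"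
    proof -
      have "{v \<in> V. (c,v) \<in> A\<^sup>* \<and> above src tgt E v m} =
            {c, h} \<union> {v \<in> V. (w,v) \<in> A\<^sup>* \<and> above src tgt E v m}"
        using reach cV hV hab by auto
      then show ?thesis using P(7) by auto
    qed
    have P0: "rs ! 0 = w" using P(5) .
    have c5: "\<forall>i < Suc k. card {e \<in> E. src e = (c#rs) ! i \<and> tgt e = (h#hs) ! i} = 2 \<and>
                    card {e \<in> E. src e = (h#hs) ! i \<and> tgt e = (c#rs) ! (i + 1)} = 1"
    proof (intro allI impI)
      fix i assume i: "i < Suc k"
      show "card {e \<in> E. src e = (c#rs) ! i \<and> tgt e = (h#hs) ! i} = 2 \<and>
                    card {e \<in> E. src e = (h#hs) ! i \<and> tgt e = (c#rs) ! (i + 1)} = 1"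
      proof (cases i)
        case 0 then show ?thesis using card_ch card_hw P0 by simp
      next
        case (Suc j) then show ?thesis using P(8) i by simp
      qed
    qed
    have wab: "w = m \<or> above src tgt E w m" using wm by (auto simp: above_iff rtrancl_eq_or_trancl)
    have c6: "{e \<in> E. (c, src e) \<in> A\<^sup>* \<and> edge_above src tgt E e m} =
             (\<Union>i < Suc k. {e \<in> E. src e = (c#rs) ! i \<and> tgt e = (h#hs) ! i} \<union>
                       {e \<in> E. src e = (h#hs) ! i \<and> tgt e = (c#rs) ! (i + 1)})"
    proof -
      have L: "{e \<in> E. (c, src e) \<in> A\<^sup>* \<and> edge_above src tgt E e m} =
          {e \<in> E. src e = c \<and> tgt e = h} \<union> {e \<in> E. src e = h \<and> tgt e = w} \<union>
          {e \<in> E. (w, src e) \<in> A\<^sup>* \<and> edge_above src tgt E e m}"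
      proof (intro equalityI subsetI)
        fix e assume "e \<in> {e \<in> E. (c, src e) \<in> A\<^sup>* \<and> edge_above src tgt E e m}"
        then have e: "e \<in> E" "(c, src e) \<in> A\<^sup>*" "edge_above src tgt E e m" by auto
        then consider "src e = c" | "src e = h" | "(w, src e) \<in> A\<^sup>*" using reach by blast
        then show "e \<in> {e \<in> E. src e = c \<and> tgt e = h} \<union> {e \<in> E. src e = h \<and> tgt e = w} \<union>
          {e \<in> E. (w, src e) \<in> A\<^sup>* \<and> edge_above src tgt E e m}"
        proof cases
          case 1 then show ?thesis using Eh e by auto
        next
          case 2
          then have "e \<in> {e \<in> E. src e = h}" using e by simp
          then have "e = g" using g by blast
          then show ?thesis using 2 e w_def by auto
        next
          case 3 then show ?thesis using e by auto
        qed
      next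
        fix e assume "e \<in> {e \<in> E. src e = c \<and> tgt e = h} \<union> {e \<in> E. src e = h \<and> tgt e = w} \<union>
          {e \<in> E. (w, src e) \<in> A\<^sup>* \<and> edge_above src tgt E e m}"
        then show "e \<in> {e \<in> E. (c, src e) \<in> A\<^sup>* \<and> edge_above src tgt E e m}"
          using reach hab wab by (auto simp: edge_above_def)
      qed
      have R: "(\<Union>i < Suc k. {e \<in> E. src e = (c#rs) ! i \<and> tgt e = (h#hs) ! i} \<union>
                       {e \<in> E. src e = (h#hs) ! i \<and> tgt e = (c#rs) ! (i + 1)}) =
           ({e \<in> E. src e = c \<and> tgt e = h} \<union> {e \<in> E. src e = h \<and> tgt e = w}) \<union>
           (\<Union>i < k. {e \<in> E. src e = rs ! i \<and> tgt e = hs ! i} \<union>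
                       {e \<in> E. src e = hs ! i \<and> tgt e = rs ! (i + 1)})"
        by (simp add: lessThan_Suc_eq_insert_0 P0)
      show ?thesis using L R P(9) by auto
    qed
    show ?thesis
      apply (rule exI[of _ "Suc k"], rule exI[of _ "c # rs"], rule exI[of _ "h # hs"])
      using P(1,2) c1 c2 c3 c4 c5 c6 by simp
  qed
qed

end



theorem mainTheorem6:
  fixes V :: "'v set" and E :: "'e set" and src tgt :: "'e \<Rightarrow> 'v"
    and r m :: 'v and X :: "'x set" and lab :: "'x \<Rightarrow> 'v"
  assumes "rooted_network V E src tgt r X lab"
    and "level1 src tgt E"
    and "is_MRCA V E src tgt r m"
  shows "\<exists>k rs hs. length rs = k + 1 \<and> length hs = k \<and> distinct (rs @ hs) \<and>
           set (rs @ hs) \<subseteq> V \<and> rs ! 0 = r \<and> rs ! k = m \<and>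
           {v \<in> V. above src tgt E v m} = set (take k rs) \<union> set hs \<and>
           (\<forall>i < k. card {e \<in> E. src e = rs ! i \<and> tgt e = hs ! i} = 2 \<and>
                    card {e \<in> E. src e = hs ! i \<and> tgt e = rs ! (i + 1)} = 1) \<and>
           {e \<in> E. edge_above src tgt E e m} =
             (\<Union>i < k. {e \<in> E. src e = rs ! i \<and> tgt e = hs ! i} \<union>
                       {e \<in> E. src e = hs ! i \<and> tgt e = rs ! (i + 1)})"
proof -
  interpret net V E src tgt r m X lab using assms by unfold_locales
  have cutr: "on_all_root_leaf_paths V E src tgt r r"
    unfolding on_all_root_leaf_paths_def using rV by (auto simp: dpath_def intro: hd_in_set)
  have mV: "m \<in> V" using cutV mcut by blast
  obtain k rs hs where P: "length rs = k + 1" "length hs = k" "distinct (rs @ hs)"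
           "set (rs @ hs) \<subseteq> {v\<in>V. (r,v) \<in> (arcs src tgt E)\<^sup>*}" "rs ! 0 = r" "rs ! k = m"
           "{v \<in> V. (r,v) \<in> (arcs src tgt E)\<^sup>* \<and> above src tgt E v m} = set (take k rs) \<union> set hs"
           "\<forall>i < k. card {e \<in> E. src e = rs ! i \<and> tgt e = hs ! i} = 2 \<and>
                    card {e \<in> E. src e = hs ! i \<and> tgt e = rs ! (i + 1)} = 1"
           "{e \<in> E. (r, src e) \<in> (arcs src tgt E)\<^sup>* \<and> edge_above src tgt E e m} =
             (\<Union>i < k. {e \<in> E. src e = rs ! i \<and> tgt e = hs ! i} \<union>
                       {e \<in> E. src e = hs ! i \<and> tgt e = rs ! (i + 1)})"
    using chain[OF cutr reach_r[OF mV]] outr by blast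
  have s1: "{v \<in> V. (r,v) \<in> (arcs src tgt E)\<^sup>* \<and> above src tgt E v m} = {v \<in> V. above src tgt E v m}"
    using reach_r by blast
  have s2: "{e \<in> E. (r, src e) \<in> (arcs src tgt E)\<^sup>* \<and> edge_above src tgt E e m} = {e \<in> E. edge_above src tgt E e m}"
    using reach_r edgeV by blast
  have s3: "set (rs @ hs) \<subseteq> V" using P(4) by blast
  show ?thesis
    apply (rule exI[of _ k], rule exI[of _ rs], rule exI[of _ hs])
    using P s1 s2 s3 by simp
qed

end
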